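(* The ordinary generating function $A(x,y;p,1)=\sum_{n\ge1}a_n(y;p,1)x^n$ is given by $$A(x,y;p,1)=xyp+\frac{x^2yp(1-p)}{1-yp}\left(\sum_{j\ge0}\frac{(-1)^jx^jp^{j+\binom{j+2}{2}}}{\prod_{i=0}^{j}(1-p-xp^{i+1})}-y^2p^2\sum_{j\ge0}\frac{(-1)^jx^jy^jp^{2j+\binom{j+2}{2}}}{\prod_{i=0}^{j}(1-p-xyp^{i+2})}\right).$$
   Context: An inversion sequence of length $n$ is a sequence $\rho=\rho_1\cdots\rho_n$ of integers with $1\le \rho_i\le i$ for all $i$; $I_{n,i}$ is the set of those of length $n$ with last letter $i$. Let $\mathrm{area}(\rho)=\rho_1+\cdots+\rho_n$ and $\mathrm{sper}(\rho)=n+\rho_1+\sum_{i=1}^{n-1}\max(\rho_{i+1}-\rho_i,0)$ (area and semi-perimeter of the associated bargraph). Define $a_n(y;p,q)=\sum_{i=1}^n y^i\sum_{\rho\in I_{n,i}}p^{\mathrm{area}(\rho)}q^{\mathrm{sper}(\rho)}$. The identity is one of power series in $x$ (with coefficients rational functions of $p,y$; e.g. valid for $|x|,|p|<1$ small enough). *)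

theory Defs
  imports Complex_Main "HOL-Computational_Algebra.Formal_Power_Series"
begin

(* Inversion sequences of length n, as lists rho = [rho_1,...,rho_n] (0-indexed in the list):
   1 <= rho_i <= i. *)
definition invseq :: "nat \<Rightarrow> nat list set" where
  "invseq n = {\<rho>. length \<rho> = n \<and> (\<forall>k<n. 1 \<le> \<rho> ! k \<and> \<rho> ! k \<le> k + 1)}"

definition invseq_last :: "nat \<Rightarrow> nat \<Rightarrow> nat list set" where
  "invseq_last n i = {\<rho> \<in> invseq n. last \<rho> = i}"

definition area :: "nat list \<Rightarrow> nat" where
  "area \<rho> = sum_list \<rho>"

(* semi-perimeter: n + rho_1 + sum_{i=1}^{n-1} max(rho_{i+1} - rho_i, 0);
   truncated nat subtraction equals max(. , 0). *)
definition sper :: "nat list \<Rightarrow> nat" where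
  "sper \<rho> = length \<rho> + hd \<rho> + (\<Sum>i<length \<rho> - 1. \<rho> ! (i + 1) - \<rho> ! i)"

definition a_poly :: "nat \<Rightarrow> complex \<Rightarrow> complex \<Rightarrow> complex \<Rightarrow> complex" where
  "a_poly n y p q = (\<Sum>i=1..n. y ^ i * (\<Sum>\<rho>\<in>invseq_last n i. p ^ area \<rho> * q ^ sper \<rho>))"

definition A_gf :: "complex \<Rightarrow> complex \<Rightarrow> complex \<Rightarrow> complex fps" where
  "A_gf y p q = Abs_fps (\<lambda>n. if n = 0 then 0 else a_poly n y p q)"

definition T1 :: "complex \<Rightarrow> complex \<Rightarrow> nat \<Rightarrow> complex fps" where
  "T1 y p j = fps_const ((-1) ^ j * p ^ (j + ((j + 2) choose 2))) * fps_X ^ j *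
     inverse (\<Prod>i=0..j. fps_const (1 - p) - fps_const (p ^ (i + 1)) * fps_X)"

definition T2 :: "complex \<Rightarrow> complex \<Rightarrow> nat \<Rightarrow> complex fps" where
  "T2 y p j = fps_const ((-1) ^ j * y ^ j * p ^ (2 * j + ((j + 2) choose 2))) * fps_X ^ j *
     inverse (\<Prod>i=0..j. fps_const (1 - p) - fps_const (y * p ^ (i + 2)) * fps_X)"

end

theory Submission
  imports Defs
begin
unbundle fps_syntax


lemma mem_invseq_Suc:
  "xs \<in> invseq (Suc n) \<longleftrightarrow> (\<exists>\<rho> k. xs = \<rho> @ [k] \<and> \<rho> \<in> invseq n \<and> 1 \<le> k \<and> k \<le> n + 1)"
proof
  assume xs: "xs \<in> invseq (Suc n)"
  then have len: "length xs = Suc n" and b: "\<forall>k<Suc n. 1 \<le> xs ! k \<and> xs ! k \<le> k + 1"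
    by (auto simp: invseq_def)
  then have ne: "xs \<noteq> []" by auto
  have eq: "xs = butlast xs @ [last xs]" using ne by simp
  have "butlast xs \<in> invseq n"
    using len b by (auto simp: invseq_def nth_butlast)
  moreover have "1 \<le> last xs \<and> last xs \<le> n + 1"
    using b len ne by (simp add: last_conv_nth)
  ultimately show "\<exists>\<rho> k. xs = \<rho> @ [k] \<and> \<rho> \<in> invseq n \<and> 1 \<le> k \<and> k \<le> n + 1"
    using eq by blast
next
  assume "\<exists>\<rho> k. xs = \<rho> @ [k] \<and> \<rho> \<in> invseq n \<and> 1 \<le> k \<and> k \<le> n + 1"
  then obtain \<rho> k where "xs = \<rho> @ [k]" "\<rho> \<in> invseq n" "1 \<le> k" "k \<le> n + 1" by blast
  then show "xs \<in> invseq (Suc n)"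
    by (auto simp: invseq_def nth_append less_Suc_eq)
qed

lemma invseq_Suc_img:
  "invseq (Suc n) = (\<lambda>(\<rho>,k). \<rho> @ [k]) ` (invseq n \<times> {1..n+1})"
  using mem_invseq_Suc[of _ n] by (auto simp: image_iff)

lemma invseq_last_Suc_img:
  assumes "1 \<le> i" "i \<le> n + 1"
  shows "invseq_last (Suc n) i = (\<lambda>\<rho>. \<rho> @ [i]) ` invseq n"
  using mem_invseq_Suc[of _ n] assms by (auto simp: invseq_last_def image_iff)

definition S :: "complex \<Rightarrow> nat \<Rightarrow> complex" where
  "S p n = (\<Sum>\<rho>\<in>invseq n. p ^ area \<rho>)"

lemma area_snoc: "area (\<rho> @ [k]) = area \<rho> + k"
  by (simp add: area_def)

lemma S_Suc: "S p (Suc n) = S p n * (\<Sum>k=1..n+1. p ^ k)"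
proof -
  have inj: "inj_on (\<lambda>(\<rho>,k). \<rho> @ [k]) (invseq n \<times> {1..n+1})"
    by (auto simp: inj_on_def)
  have "S p (Suc n) = (\<Sum>(\<rho>,k)\<in>invseq n \<times> {1..n+1}. p ^ area (\<rho> @ [k]))"
    unfolding S_def invseq_Suc_img by (subst sum.reindex[OF inj]) (simp add: case_prod_unfold)
  also have "\<dots> = (\<Sum>\<rho>\<in>invseq n. \<Sum>k\<in>{1..n+1}. p ^ area \<rho> * p ^ k)"
    by (subst sum.cartesian_product) (simp only: area_snoc power_add)
  also have "\<dots> = S p n * (\<Sum>k=1..n+1. p ^ k)"
    unfolding S_def sum_distrib_right by (simp only: sum_distrib_left)
  finally show ?thesis .
qed

lemma S_0: "S p 0 = 1"
proof -
  have "invseq 0 = {[]}" by (auto simp: invseq_def)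
  then show ?thesis by (simp add: S_def area_def)
qed

lemma a_poly_Suc: "a_poly (Suc n) y p 1 = S p n * (\<Sum>i=1..Suc n. (y*p) ^ i)"
proof -
  have key: "(\<Sum>\<rho>\<in>invseq_last (Suc n) i. p ^ area \<rho> * 1 ^ sper \<rho>) = p ^ i * S p n"
    if i: "i \<in> {1..Suc n}" for i
  proof -
    have inj: "inj_on (\<lambda>\<rho>. \<rho> @ [i]) (invseq n)" by (auto simp: inj_on_def)
    have "(\<Sum>\<rho>\<in>invseq_last (Suc n) i. p ^ area \<rho> * 1 ^ sper \<rho>) = (\<Sum>\<rho>\<in>invseq n. p ^ i * p ^ area \<rho>)"
      using i by (simp add: invseq_last_Suc_img sum.reindex[OF inj] area_snoc power_add mult.commute)
    then show ?thesis by (simp add: S_def sum_distrib_left)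
  qed
  have "a_poly (Suc n) y p 1 = (\<Sum>i=1..Suc n. y ^ i * (p ^ i * S p n))"
    unfolding a_poly_def by (rule sum.cong) (simp_all only: key)
  also have "\<dots> = S p n * (\<Sum>i=1..Suc n. (y*p) ^ i)"
    by (simp only: sum_distrib_left power_mult_distrib mult_ac)
  finally show ?thesis .
qed

lemma geo: "(1 - q) * (\<Sum>i=1..m. (q::complex) ^ i) = q - q ^ (m+1)"
proof (induction m)
  case (Suc m)
  have "(\<Sum>i=1..Suc m. q^i) = (\<Sum>i=1..m. q^i) + q^(Suc m)" by simp
  moreover have "(1-q)*(T + q^(Suc m)) = q - q^(Suc m + 1)" if h: "(1-q)*T = q - q^(m+1)" for T
  proof -
    have "(1-q)*(T + q^(Suc m)) = (1-q)*T + (1-q)*q^(Suc m)" by (simp add: algebra_simps)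
    also have "\<dots> = q - q^(m+1) + (1-q)*q^(Suc m)" using h by simp
    also have "\<dots> = q - q^(Suc m + 1)" by (simp add: algebra_simps)
    finally show ?thesis .
  qed
  ultimately show ?case using Suc by simp
qed simp


definition D :: "complex \<Rightarrow> complex \<Rightarrow> nat \<Rightarrow> complex fps" where
  "D p c i = fps_const (1 - p) - fps_const (c * p ^ (i + 1)) * fps_X"

definition Tc :: "complex \<Rightarrow> complex \<Rightarrow> nat \<Rightarrow> complex fps" where
  "Tc p c j = fps_const ((-1) ^ j * c ^ j * p ^ (j + ((j + 2) choose 2))) * fps_X ^ j *
     inverse (\<Prod>i=0..j. D p c i)"

lemma T1_eq: "T1 y p j = Tc p 1 j"
  by (simp add: T1_def Tc_def D_def)

lemma T2_eq: "T2 y p j = Tc p (y * p) j"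
proof -
  have a: "(-1) ^ j * y ^ j * p ^ (2 * j + ((j + 2) choose 2)) =
        (-1) ^ j * (y * p) ^ j * p ^ (j + ((j + 2) choose 2))"
    by (simp add: power_mult_distrib power_add mult_2 mult_2_right mult_ac)
  have b: "y * p ^ (i + 2) = y * p * p ^ (i + 1)" for i
    by (simp add: mult_ac)
  show ?thesis by (simp only: T2_def Tc_def D_def a b)
qed

lemma Tc_nth_low: "n < j \<Longrightarrow> Tc p c j $ n = 0"
proof -
  assume "n < j"
  have "Tc p c j = fps_X ^ j * (fps_const ((-1) ^ j * c ^ j * p ^ (j + ((j + 2) choose 2))) *
     inverse (\<Prod>i=0..j. D p c i))" by (simp add: Tc_def mult_ac)
  then show ?thesis using \<open>n < j\<close> by (simp only: fps_X_power_mult_nth) simp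
qed

lemma sums_fps_low:
  fixes f :: "nat \<Rightarrow> 'a::comm_ring_1 fps"
  assumes "\<And>j n. n < j \<Longrightarrow> f j $ n = 0"
  shows "f sums Abs_fps (\<lambda>n. \<Sum>j\<le>n. f j $ n)"
  unfolding sums_def
proof (rule tendsto_fpsI)
  fix n
  show "\<forall>\<^sub>F N in sequentially. sum f {..<N} $ n = Abs_fps (\<lambda>n. \<Sum>j\<le>n. f j $ n) $ n"
    unfolding eventually_at_top_linorder
  proof (intro exI[of _ "Suc n"] allI impI)
    fix N assume N: "N \<ge> Suc n"
    have "sum f {..<N} $ n = (\<Sum>j<N. f j $ n)" by (simp add: fps_sum_nth)
    also have "\<dots> = (\<Sum>j\<le>n. f j $ n)"
      by (rule sum.mono_neutral_right) (use N assms in auto)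
    finally show "sum f {..<N} $ n = Abs_fps (\<lambda>n. \<Sum>j\<le>n. f j $ n) $ n" by simp
  qed
qed

lemma partial_nth:
  fixes f :: "nat \<Rightarrow> 'a::comm_ring_1 fps"
  assumes "\<And>j n. n < j \<Longrightarrow> f j $ n = 0" "k < N"
  shows "(\<Sum>j<N. f j) $ k = (\<Sum>j\<le>k. f j $ k)"
proof -
  have "(\<Sum>j<N. f j) $ k = (\<Sum>j<N. f j $ k)" by (simp add: fps_sum_nth)
  also have "\<dots> = (\<Sum>j\<le>k. f j $ k)"
    by (rule sum.mono_neutral_right) (use assms in auto)
  finally show ?thesis .
qed

lemma choose_step: "p ^ (Suc (Suc (Suc j)) choose 2) = p ^ (Suc (Suc j) choose 2) * (p::complex) ^ (Suc (Suc j))"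
proof -
  have "Suc (Suc (Suc j)) choose 2 = (Suc (Suc j) choose 2) + Suc (Suc j)"
    by (simp add: numeral_2_eq_2)
  then show ?thesis by (simp add: power_add)
qed

lemma D0_nz: "p \<noteq> 1 \<Longrightarrow> D p c i $ 0 \<noteq> 0"
  by (simp add: D_def)

lemma Tc0: assumes "p \<noteq> 1" shows "Tc p c 0 * D p c 0 = fps_const p"
proof -
  have "Tc p c 0 * D p c 0 = fps_const p * (inverse (D p c 0) * D p c 0)"
    by (simp add: Tc_def mult_ac numeral_2_eq_2)
  also have "\<dots> = fps_const p" using D0_nz[OF assms] by (simp add: inverse_mult_eq_1)
  finally show ?thesis .
qed

lemma TcSuc: assumes "p \<noteq> 1"
  shows "Tc p c (Suc j) * D p c 0 = - fps_const (c * p ^ 3) * fps_X * Tc p (p * c) j"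
proof -
  have Dsh: "D p c (Suc i) = D p (p * c) i" for i
    by (simp add: D_def mult_ac)
  have pr: "(\<Prod>i=0..Suc j. D p c i) = D p c 0 * (\<Prod>i=0..j. D p (p * c) i)"
    by (simp only: prod.atLeast0_atMost_Suc_shift comp_def Dsh)
  have inv: "inverse (D p c 0) * D p c 0 = 1" using D0_nz[OF assms] by (simp add: inverse_mult_eq_1)
  have cst: "(-1) ^ Suc j * c ^ Suc j * p ^ (Suc j + ((Suc j + 2) choose 2)) =
      - (c * p ^ 3) * ((-1) ^ j * (p * c) ^ j * p ^ (j + ((j + 2) choose 2)))"
    by (simp add: choose_step power_add power_mult_distrib numeral_3_eq_3 mult_ac)
  have "Tc p c (Suc j) * D p c 0 = fps_const ((-1) ^ Suc j * c ^ Suc j * p ^ (Suc j + ((Suc j + 2) choose 2)))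
      * fps_X ^ Suc j * inverse (\<Prod>i=0..j. D p (p * c) i) * (inverse (D p c 0) * D p c 0)"
    unfolding Tc_def pr fps_inverse_mult by (simp only: mult_ac)
  also have "\<dots> = fps_const (- (c * p ^ 3)) * fps_X * (fps_const ((-1) ^ j * (p * c) ^ j * p ^ (j + ((j + 2) choose 2)))
      * fps_X ^ j * inverse (\<Prod>i=0..j. D p (p * c) i))"
    unfolding inv cst by (simp only: fps_const_mult[symmetric] power_Suc mult_1_right mult_1_left mult_ac)
  finally show ?thesis by (simp add: Tc_def fps_const_neg[symmetric] del: fps_const_neg)
qed


lemma Pid: assumes "p \<noteq> 1"
  shows "(\<Sum>j<Suc N. Tc p c j) * D p c 0 = fps_const p - fps_const (c*p^3) * fps_X * (\<Sum>j<N. Tc p (p*c) j)"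
proof -
  have "(\<Sum>j<Suc N. Tc p c j) * D p c 0 = Tc p c 0 * D p c 0 + (\<Sum>j<N. Tc p c (Suc j) * D p c 0)"
    by (simp only: sum.lessThan_Suc_shift distrib_right sum_distrib_right)
  also have "\<dots> = fps_const p + (\<Sum>j<N. - fps_const (c * p ^ 3) * fps_X * Tc p (p * c) j)"
    by (simp only: Tc0[OF assms] TcSuc[OF assms])
  also have "\<dots> = fps_const p - fps_const (c*p^3) * fps_X * (\<Sum>j<N. Tc p (p*c) j)"
    by (simp add: sum_distrib_left sum_negf fps_const_neg[symmetric] del: fps_const_neg)
  finally show ?thesis .
qed

definition g :: "complex \<Rightarrow> complex \<Rightarrow> nat \<Rightarrow> complex" where
  "g p c n = (\<Sum>j\<le>n. Tc p c j $ n)"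

lemma P_nth: "k < N \<Longrightarrow> (\<Sum>j<N. Tc p c j) $ k = g p c k"
  unfolding g_def by (rule partial_nth) (auto intro: Tc_nth_low)

lemma grec: assumes "p \<noteq> 1"
  shows "(1-p) * g p c n = (if n = 0 then p else c*p*g p c (n-1) - c*p^3 * g p (p*c) (n-1))"
proof -
  define Q where "Q = (\<Sum>j<Suc (Suc n). Tc p c j)"
  define Q' where "Q' = (\<Sum>j<Suc n. Tc p (p*c) j)"
  have "Q * D p c 0 = fps_const p - fps_const (c*p^3) * fps_X * Q'"
    unfolding Q_def Q'_def by (rule Pid[OF assms])
  moreover have "Q * D p c 0 = fps_const (1-p) * Q - fps_const (c*p) * (fps_X * Q)"
    by (simp add: D_def algebra_simps)
  moreover have "fps_const p - fps_const (c*p^3) * fps_X * Q' = fps_const p - fps_const (c*p^3) * (fps_X * Q')"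
    by (simp add: mult_ac)
  ultimately have "(fps_const (1-p) * Q - fps_const (c*p) * (fps_X * Q)) $ n = (fps_const p - fps_const (c*p^3) * (fps_X * Q')) $ n"
    by simp
  then have e: "(1-p) * Q $ n - c*p * (if n = 0 then 0 else Q $ (n-1)) = (if n = 0 then p else 0) - c*p^3 * (if n = 0 then 0 else Q' $ (n-1))"
    by simp
  have q1: "Q $ n = g p c n" unfolding Q_def by (rule P_nth) simp
  have q2: "Q $ (n-1) = g p c (n-1)" unfolding Q_def by (rule P_nth) simp
  have q3: "Q' $ (n-1) = g p (p*c) (n-1)" unfolding Q'_def by (rule P_nth) simp
  show ?thesis using e unfolding q1 q2 q3 by (auto simp: algebra_simps)
qed

lemma g_closed: assumes "p \<noteq> 1"
  shows "g p c n = S p (Suc n) * c ^ n / (1-p)"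
proof (induction n arbitrary: c)
  case 0
  have "S p 1 = p" using S_Suc[of p 0] by (simp add: S_0)
  moreover have "(1-p) * g p c 0 = p" using grec[OF assms, of c 0] by simp
  ultimately show ?case using assms by (simp add: field_simps)
next
  case (Suc n)
  have nz: "1 - p \<noteq> 0" using assms by simp
  have dv: "\<And>X Y. (1-p)*X = Y \<Longrightarrow> X = Y/(1-p)" using nz by (simp add: field_simps)
  have G: "(\<Sum>k=1..Suc n + 1. p ^ k) = (p - p ^ (Suc n + 1 + 1)) / (1-p)"
    by (rule dv) (rule geo)
  have "(1-p) * g p c (Suc n) = c*p*g p c n - c*p^3 * g p (p*c) n"
    using grec[OF assms, of c "Suc n"] by simp
  also have "\<dots> = c*p*(S p (Suc n) * c ^ n / (1-p)) - c*p^3 * (S p (Suc n) * (p*c) ^ n / (1-p))"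
    by (simp only: Suc.IH)
  also have "\<dots> = (c*p*(S p (Suc n) * c ^ n) - c*p^3 * (S p (Suc n) * (p*c) ^ n)) / (1-p)"
    by (simp add: diff_divide_distrib)
  also have "c*p*(S p (Suc n) * c ^ n) - c*p^3 * (S p (Suc n) * (p*c) ^ n) = S p (Suc n) * c ^ Suc n * (p - p^(Suc n + 1 + 1))"
    by (simp add: algebra_simps power_mult_distrib power_add numeral_3_eq_3)
  also have "S p (Suc n) * c ^ Suc n * (p - p^(Suc n + 1 + 1)) / (1-p) = S p (Suc n) * ((p - p^(Suc n + 1 + 1)) / (1-p)) * c ^ Suc n"
    by simp
  also have "\<dots> = S p (Suc (Suc n)) * c ^ Suc n"
    by (simp only: S_Suc[of p "Suc n"] G)
  finally have "(1-p) * g p c (Suc n) = S p (Suc (Suc n)) * c ^ Suc n" .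
  then show ?case using nz by (simp add: field_simps)
qed

lemma Tc_sums: "Tc p c sums Abs_fps (g p c)"
proof -
  have "Tc p c sums Abs_fps (\<lambda>n. \<Sum>j\<le>n. Tc p c j $ n)"
    by (rule sums_fps_low) (rule Tc_nth_low)
  then show ?thesis by (simp add: g_def[abs_def])
qed

lemma key_alg:
  fixes Sv y p :: complex
  assumes "1 - p \<noteq> 0" "1 - y*p \<noteq> 0"
  shows "Sv * ((y*p - (y*p)^(Suc (Suc n)+1))/(1-y*p)) = y*p*(1-p)/(1-y*p) * (Sv * 1^n/(1-p) - y^2*p^2*(Sv * (y*p)^n/(1-p)))"
proof -
  have "y*p*(1-p)/(1-y*p) * (Sv * 1^n/(1-p) - y^2*p^2*(Sv * (y*p)^n/(1-p)))
      = y*p/(1-y*p) * (Sv - y^2*p^2*(Sv * (y*p)^n))"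
  proof -
    have gen: "w*u/v*(a/u - b/u) = w/v*(a-b)" if "u \<noteq> 0" for w u v a b :: complex
      using that by (simp add: diff_divide_distrib[symmetric])
    show ?thesis using gen[OF assms(1), of "y*p" "1-y*p" Sv "y^2*p^2*(Sv * (y*p)^n)"]
      by (simp add: times_divide_eq_right)
  qed
  also have "y^2*p^2*(Sv * (y*p)^n) = Sv * (y*p)^(Suc (Suc n))"
    by (simp add: power2_eq_square power_mult_distrib mult_ac)
  also have "y*p/(1-y*p) * (Sv - Sv * (y*p)^(Suc (Suc n))) = (y*p*(Sv - Sv*(y*p)^(Suc (Suc n))))/(1-y*p)"
    by simp
  also have "y*p*(Sv - Sv*(y*p)^(Suc (Suc n))) = Sv*(y*p - (y*p)^(Suc (Suc n)+1))"
  proof -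
    have e: "(y*p)^(Suc (Suc n)+1) = y*p*(y*p)^(Suc (Suc n))" by simp
    have "y*p*(Sv - Sv*Q) = Sv*(y*p - y*p*Q)" for Q by (simp add: algebra_simps)
    then show ?thesis unfolding e .
  qed
  finally show ?thesis by (metis times_divide_eq_right)
qed

theorem theorem2p7:
  fixes y p :: complex
  assumes "p \<noteq> 1" and "y * p \<noteq> 1"
  shows "summable (T1 y p) \<and> summable (T2 y p) \<and>
    A_gf y p 1 = fps_const (y * p) * fps_X
      + fps_const (y * p * (1 - p) / (1 - y * p)) * fps_X ^ 2 *
        ((\<Sum>j. T1 y p j) - fps_const (y ^ 2 * p ^ 2) * (\<Sum>j. T2 y p j))"
proof -
  have e1: "T1 y p = Tc p 1" by (rule ext) (rule T1_eq)
  have e2: "T2 y p = Tc p (y*p)" by (rule ext) (rule T2_eq)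
  have s1: "T1 y p sums Abs_fps (g p 1)" unfolding e1 by (rule Tc_sums)
  have s2: "T2 y p sums Abs_fps (g p (y*p))" unfolding e2 by (rule Tc_sums)
  have nz: "1 - p \<noteq> 0" "1 - y*p \<noteq> 0" using assms by auto
  define K where "K = y * p * (1 - p) / (1 - y * p)"
  define F where "F = Abs_fps (g p 1) - fps_const (y ^ 2 * p ^ 2) * Abs_fps (g p (y*p))"
  have "A_gf y p 1 = fps_const (y * p) * fps_X + fps_const K * fps_X ^ 2 * F"
  proof (rule fps_ext)
    fix m
    have r: "fps_const K * fps_X ^ 2 * F = fps_X ^ 2 * (fps_const K * F)" by (simp add: mult_ac)
    show "A_gf y p 1 $ m = (fps_const (y * p) * fps_X + fps_const K * fps_X ^ 2 * F) $ m"
    proof (cases m)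
      case 0
      then show ?thesis unfolding r by (simp add: A_gf_def fps_X_power_mult_nth)
    next
      case (Suc m')
      show ?thesis
      proof (cases m')
        case 0
        have "a_poly (Suc 0) y p 1 = y * p" using a_poly_Suc[of 0 y p] by (simp add: S_0)
        then show ?thesis unfolding r using Suc 0 by (simp add: A_gf_def fps_X_power_mult_nth)
      next
        case (Suc n)
        have m: "m = Suc (Suc n)" using Suc \<open>m = Suc m'\<close> by simp
        have r1: "(fps_const (y*p) * fps_X) $ m = 0" using m by simp
        have r2: "(fps_X^2 * (fps_const K * F)) $ m = K * F $ n" using m by (simp add: fps_X_power_mult_nth)
        have r3: "F $ n = g p 1 n - y^2*p^2 * g p (y*p) n" by (simp add: F_def)
        have rhs: "(fps_const (y * p) * fps_X + fps_const K * fps_X ^ 2 * F) $ m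
            = K * (g p 1 n - y^2*p^2 * g p (y*p) n)"
          unfolding r fps_add_nth r1 r2 r3 by simp
        have dv: "\<And>X Y. (1-y*p)*X = Y \<Longrightarrow> X = Y/(1-y*p)" using nz by (simp add: field_simps)
        have G: "(\<Sum>i=1..Suc (Suc n). (y*p) ^ i) = (y*p - (y*p) ^ (Suc (Suc n)+1)) / (1 - y*p)"
          by (rule dv) (rule geo)
        have lhs: "A_gf y p 1 $ m = S p (Suc n) * ((y*p - (y*p) ^ (Suc (Suc n)+1)) / (1 - y*p))"
          unfolding m A_gf_def using a_poly_Suc[of "Suc n" y p] G by simp
        show ?thesis unfolding lhs rhs unfolding g_closed[OF assms(1)] K_def
          by (rule key_alg[OF nz])
      qed
    qed
  qed
  then show ?thesis
    using s1 s2 by (simp add: sums_summable sums_unique[symmetric] K_def F_def)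
qed

end
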